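(* Let $K$ be a number field and let $\alpha=p/q$ be a positive rational number with $\gcd(p,q)=1$ which is not an integer and is not of the form $1/n$ for an integer $n$. Let $F\in K((x))$ be a Laurent series such that there exist $d\ge 0$ and polynomials $P_0,\dots,P_d\in K[x]$ with $P_d\ne0$ and $\sum_{i=0}^d P_i(x)F(x^{\alpha^i})=0$. Then there is a Laurent series $G\in K((x))$ with $F(x)=G(x^{q^d})$.
   Context: For a Laurent series $F=\sum_i f_ix^i$ and $\gamma>0$, $F(x^\gamma)=\sum_i f_i x^{\gamma i}$, regarded as a Hahn series (formal series with well-ordered support in $\mathbb{R}$); the equation holds in the field of such Hahn series over $K$. *)

theory Defs
  imports "HOL-Computational_Algebra.Computational_Algebra"
begin

text \<open>A number field, realised (as every number field can be) as a subfield of the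
complex numbers which is finite-dimensional as a vector space over the rationals.\<close>
definition number_field :: "complex set \<Rightarrow> bool" where
  "number_field K \<longleftrightarrow>
     0 \<in> K \<and> 1 \<in> K \<and>
     (\<forall>x\<in>K. \<forall>y\<in>K. x + y \<in> K \<and> x - y \<in> K \<and> x * y \<in> K) \<and>
     (\<forall>x\<in>K. x \<noteq> 0 \<longrightarrow> inverse x \<in> K) \<and>
     (\<exists>B. finite B \<and> B \<subseteq> K \<and>
          (\<forall>x\<in>K. \<exists>c :: complex \<Rightarrow> rat. x = (\<Sum>b\<in>B. of_rat (c b) * b)))"

text \<open>Hahn series whose support lies in the rationals, represented by their
coefficient function (exponent \<mapsto> coefficient).\<close>
type_synonym 'a qhahn = "rat \<Rightarrow> 'a"

text \<open>F(x^\<gamma>) for a Laurent series F and \<gamma> > 0: coefficient of x^r is f_{r/\<gamma>}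
if r/\<gamma> is an integer, and 0 otherwise.\<close>
definition fls_subst_pow :: "'a::zero fls \<Rightarrow> rat \<Rightarrow> 'a qhahn" where
  "fls_subst_pow F \<gamma> = (\<lambda>r. if r / \<gamma> \<in> \<int> then fls_nth F \<lfloor>r / \<gamma>\<rfloor> else 0)"

definition poly_hahn_mult :: "'a::comm_semiring_1 poly \<Rightarrow> 'a qhahn \<Rightarrow> 'a qhahn" where
  "poly_hahn_mult P H = (\<lambda>r. \<Sum>j\<le>degree P. coeff P j * H (r - of_nat j))"

end

theory Submission
  imports Defs
begin

lemma fls_from_dvd:
  fixes F :: "'a::zero fls" and k :: nat
  assumes k: "k > 0" and dv: "\<forall>n. fls_nth F n \<noteq> 0 \<longrightarrow> int k dvd n"
  shows "F = fls_compose_power (Abs_fls (\<lambda>n. fls_nth F (n * int k))) k"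
proof -
  let ?g = "\<lambda>n. fls_nth F (n * int k)"
  have mem: "?g \<in> {f::int \<Rightarrow> 'a. \<forall>\<^sub>\<infinity> n::nat. f (- int n) = 0}"
  proof -
    let ?s = "fls_subdegree F"
    have "{n::nat. ?g (- int n) \<noteq> 0} \<subseteq> {..nat (- ?s)}"
    proof
      fix n assume "n \<in> {n::nat. ?g (- int n) \<noteq> 0}"
      then have "fls_nth F (- int n * int k) \<noteq> 0" by simp
      then have "?s \<le> - int n * int k" by (rule fls_subdegree_leI)
      moreover have "- int n * int k \<le> - int n" using k by (simp add: mult_le_cancel_left1)
      ultimately show "n \<in> {..nat (- ?s)}" by simp
    qed
    then have "finite {n::nat. ?g (- int n) \<noteq> 0}" using finite_subset by blast
    then show ?thesis by (simp add: eventually_cofinite)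
  qed
  show ?thesis
  proof (rule fls_eqI)
    fix n
    show "fls_nth F n = fls_nth (fls_compose_power (Abs_fls ?g) k) n"
    proof (cases "int k dvd n")
      case True
      then show ?thesis using k Abs_fls_inverse[OF mem]
        by (simp add: fls_compose_power.rep_eq)
    next
      case False
      then show ?thesis using k dv by (auto simp: fls_compose_power.rep_eq)
    qed
  qed
qed

theorem mainTheorem4:
  fixes K :: "complex set" and p q :: nat and d :: nat
    and F :: "complex fls" and P :: "nat \<Rightarrow> complex poly"
  assumes K: "number_field K"
    and pq: "p > 0" "q > 0" "coprime p q"
    and not_int: "q \<noteq> 1"
    and not_inv: "p \<noteq> 1"
    and F_K: "\<forall>n. fls_nth F n \<in> K"
    and P_K: "\<forall>i\<le>d. \<forall>j. coeff (P i) j \<in> K"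
    and Pd: "P d \<noteq> 0"
    and eq: "(\<lambda>r. \<Sum>i\<le>d. poly_hahn_mult (P i)
                 (fls_subst_pow F ((of_nat p / of_nat q) ^ i)) r) = (\<lambda>r. 0)"
  shows "\<exists>G :: complex fls. (\<forall>n. fls_nth G n \<in> K) \<and> F = fls_compose_power G (q ^ d)"
proof -
  have K0: "0 \<in> K" using K unfolding number_field_def by blast
  have key: "\<forall>n. fls_nth F n \<noteq> 0 \<longrightarrow> int (q ^ d) dvd n"
  proof (rule ccontr)
    assume "\<not> ?thesis"
    then obtain n1 where n1: "fls_nth F n1 \<noteq> 0" "\<not> int q ^ d dvd n1" by auto
    then have d1: "d \<ge> 1" by (cases d) auto
    define S where "S k = (\<exists>n. fls_nth F n \<noteq> 0 \<and> \<not> int q ^ (k+1) dvd n)" for k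
    have Sd: "S (d-1)" using n1 d1 unfolding S_def by (intro exI[of _ n1]) simp
    define m where "m = (LEAST k. S k)"
    have Sm: "S m" unfolding m_def by (rule LeastI[of S, OF Sd])
    have md: "m + 1 \<le> d" using Least_le[of S, OF Sd] d1 unfolding m_def[symmetric] by simp
    have allm: "int q ^ m dvd n" if "fls_nth F n \<noteq> 0" for n
    proof (cases m)
      case 0 then show ?thesis by simp
    next
      case (Suc m')
      have "\<not> S m'" using not_less_Least[of m' S] Suc unfolding m_def by simp
      then show ?thesis using that Suc unfolding S_def by auto
    qed
    define sub where "sub = fls_subdegree F"
    define T where "T k = (fls_nth F (sub + int k) \<noteq> 0 \<and> \<not> int q ^ (m+1) dvd (sub + int k))" for k
    obtain nw where nw: "fls_nth F nw \<noteq> 0" "\<not> int q ^ (m+1) dvd nw" using Sm unfolding S_def by auto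
    have "sub \<le> nw" unfolding sub_def by (rule fls_subdegree_leI[OF nw(1)])
    then have Tw: "T (nat (nw - sub))" using nw unfolding T_def by simp
    define k0 where "k0 = (LEAST k. T k)"
    have Tk0: "T k0" unfolding k0_def by (rule LeastI[of T, OF Tw])
    define n0 where "n0 = sub + int k0"
    have n0: "fls_nth F n0 \<noteq> 0" "\<not> int q ^ (m+1) dvd n0" using Tk0 unfolding T_def n0_def by auto
    have n0min: "n0 \<le> n" if "fls_nth F n \<noteq> 0" "\<not> int q ^ (m+1) dvd n" for n
    proof -
      have "sub \<le> n" unfolding sub_def by (rule fls_subdegree_leI[OF that(1)])
      then have "T (nat (n - sub))" using that unfolding T_def by simp
      then have "k0 \<le> nat (n - sub)" unfolding k0_def by (rule Least_le)
      then show ?thesis using \<open>sub \<le> n\<close> unfolding n0_def by simp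
    qed
    define j0 where "j0 = (LEAST j. coeff (P d) j \<noteq> 0)"
    obtain jw where jw: "coeff (P d) jw \<noteq> 0" using Pd by (metis leading_coeff_0_iff)
    have j0: "coeff (P d) j0 \<noteq> 0" unfolding j0_def by (rule LeastI[of "\<lambda>j. coeff (P d) j \<noteq> 0" jw, OF jw])
    have j0min: "j0 \<le> j" if "coeff (P d) j \<noteq> 0" for j
      unfolding j0_def by (rule Least_le[of "\<lambda>j. coeff (P d) j \<noteq> 0", OF that])
    have j0deg: "j0 \<le> degree (P d)" using j0 le_degree by blast
    define \<alpha> :: rat where "\<alpha> = of_nat p / of_nat q"
    have \<alpha>0: "\<alpha> \<noteq> 0" using pq unfolding \<alpha>_def by simp
    define r :: rat where "r = \<alpha> ^ d * of_int n0 + of_nat j0"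
    have cop: "coprime (int q ^ (m+1)) (int p ^ d)" using pq(3)
      by (simp add: coprime_commute)
    have crux: "i = d \<and> j = j0"
      if ij: "i \<le> d" "coeff (P i) j \<noteq> 0" "fls_subst_pow F (\<alpha> ^ i) (r - of_nat j) \<noteq> 0" for i j
    proof -
      have intx: "(r - of_nat j) / \<alpha> ^ i \<in> \<int>" and
        Fx: "fls_nth F \<lfloor>(r - of_nat j) / \<alpha> ^ i\<rfloor> \<noteq> 0"
        using ij(3) unfolding fls_subst_pow_def by (auto split: if_splits)
      obtain n where nx: "(r - of_nat j) / \<alpha> ^ i = of_int n" using intx by (auto elim: Ints_cases)
      have Fn: "fls_nth F n \<noteq> 0" using Fx nx by simp
      have rq: "r - of_nat j = \<alpha> ^ i * of_int n" using nx \<alpha>0 by (simp add: field_simps)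
      have qd: "(of_nat q :: rat) ^ d = of_nat q ^ i * of_nat q ^ (d - i)"
        using ij(1) by (simp add: power_add[symmetric])
      have qi0: "(of_nat q :: rat) ^ i \<noteq> 0" and qd0: "(of_nat q :: rat) ^ d \<noteq> 0"
        using pq(2) by auto
      have L: "(of_nat q :: rat) ^ d * (r - of_nat j) = of_nat p ^ d * of_int n0 + of_nat q ^ d * (of_nat j0 - of_nat j)"
        unfolding r_def \<alpha>_def power_divide using qd0 pq(2) by (simp add: algebra_simps)
      have R: "(of_nat q :: rat) ^ d * (\<alpha> ^ i * of_int n) = of_nat p ^ i * of_nat q ^ (d - i) * of_int n"
      proof -
        have "(of_nat q :: rat) ^ d * (\<alpha> ^ i * of_int n) = (of_nat q ^ i * of_nat q ^ (d - i)) * (of_nat p ^ i / of_nat q ^ i * of_int n)"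
          unfolding \<alpha>_def power_divide qd ..
        also have "\<dots> = (of_nat q ^ i / of_nat q ^ i) * (of_nat p ^ i * of_nat q ^ (d - i) * of_int n)"
          by (simp only: times_divide_eq_left times_divide_eq_right mult_ac)
        also have "\<dots> = of_nat p ^ i * of_nat q ^ (d - i) * of_int n" using qi0 pq(2) by simp
        finally show ?thesis .
      qed
      have "of_nat p ^ d * of_int n0 + of_nat q ^ d * (of_nat j0 - of_nat j)
           = (of_nat p ^ i * of_nat q ^ (d - i) * of_int n :: rat)"
        using rq L R by metis
      then have E: "int p ^ d * n0 + int q ^ d * (int j0 - int j) = int p ^ i * int q ^ (d - i) * n"
      proof -
        have "(rat_of_int (int p ^ d * n0 + int q ^ d * (int j0 - int j))) = rat_of_int (int p ^ i * int q ^ (d - i) * n)"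
          using \<open>of_nat p ^ d * of_int n0 + _ = _\<close> by simp
        then show ?thesis by (simp only: of_int_eq_iff)
      qed
      have qm1d: "int q ^ (m+1) dvd int q ^ d * (int j0 - int j)"
        using md by (intro dvd_mult2 le_imp_power_dvd) simp
      show ?thesis
      proof (cases "i = d")
        case False
        then have "d - i \<ge> 1" using ij(1) by simp
        then have "int q dvd int q ^ (d - i)" by (metis dvd_power One_nat_def Suc_le_lessD bot_nat_0.not_eq_extremum)
        have "int q ^ m * int q dvd n * int q ^ (d - i)"
          using allm[OF Fn] \<open>int q dvd int q ^ (d - i)\<close> by (rule mult_dvd_mono)
        then have "int q ^ (m+1) dvd int p ^ i * int q ^ (d - i) * n"
          by (metis dvd_mult mult.commute mult.left_commute power_Suc2 Suc_eq_plus1)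
        then have "int q ^ (m+1) dvd int p ^ d * n0"
          using qm1d E by (metis dvd_add_left_iff)
        then have "int q ^ (m+1) dvd n0" using cop by (simp add: coprime_dvd_mult_right_iff)
        then show ?thesis using n0 by simp
      next
        case True
        have E': "int p ^ d * n0 + int q ^ d * (int j0 - int j) = int p ^ d * n"
          using E True by simp
        have ndv: "\<not> int q ^ (m+1) dvd n"
        proof
          assume "int q ^ (m+1) dvd n"
          then have "int q ^ (m+1) dvd int p ^ d * n" by simp
          then have "int q ^ (m+1) dvd int p ^ d * n0"
            using qm1d E' by (metis dvd_add_left_iff)
          then have "int q ^ (m+1) dvd n0" using cop by (simp add: coprime_dvd_mult_right_iff)
          then show False using n0 by simp
        qed
        have "n0 \<le> n" using n0min[OF Fn ndv] .
        have "j0 \<le> j" using j0min ij(2) True by simp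
        then have "int q ^ d * (int j0 - int j) \<le> 0"
          using pq(2) by (simp add: mult_nonneg_nonpos)
        then have "int p ^ d * n \<le> int p ^ d * n0" using E' by linarith
        then have "n \<le> n0" using pq(1) by (simp add: mult_le_cancel_left)
        then have "n = n0" using \<open>n0 \<le> n\<close> by simp
        then have "int q ^ d * (int j0 - int j) = 0" using E' by simp
        then have "j = j0" using pq(2) by simp
        then show ?thesis using True by simp
      qed
    qed
    define g where "g i = poly_hahn_mult (P i) (fls_subst_pow F (\<alpha> ^ i)) r" for i
    have "(\<Sum>i\<le>d. g i) = 0" using fun_cong[OF eq, of r] unfolding g_def \<alpha>_def by simp
    moreover have "(\<Sum>i\<le>d. g i) = g d"
    proof -
      have "(\<Sum>i\<le>d. g i) = g d + (\<Sum>i\<in>{..d} - {d}. g i)"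
        by (simp add: sum.remove)
      moreover have "(\<Sum>i\<in>{..d} - {d}. g i) = 0"
      proof (rule sum.neutral, rule ballI)
        fix i assume i: "i \<in> {..d} - {d}"
        show "g i = 0" unfolding g_def poly_hahn_mult_def
        proof (rule sum.neutral, rule ballI)
          fix j assume "j \<in> {..degree (P i)}"
          show "coeff (P i) j * fls_subst_pow F (\<alpha> ^ i) (r - of_nat j) = 0"
            using crux[of i j] i by auto
        qed
      qed
      ultimately show ?thesis by simp
    qed
    moreover have "g d = coeff (P d) j0 * fls_nth F n0"
    proof -
      have "g d = (\<Sum>j\<le>degree (P d). coeff (P d) j * fls_subst_pow F (\<alpha> ^ d) (r - of_nat j))"
        unfolding g_def poly_hahn_mult_def by simp
      also have "\<dots> = coeff (P d) j0 * fls_subst_pow F (\<alpha> ^ d) (r - of_nat j0)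
          + (\<Sum>j\<in>{..degree (P d)} - {j0}. coeff (P d) j * fls_subst_pow F (\<alpha> ^ d) (r - of_nat j))"
        using j0deg by (simp add: sum.remove)
      also have "(\<Sum>j\<in>{..degree (P d)} - {j0}. coeff (P d) j * fls_subst_pow F (\<alpha> ^ d) (r - of_nat j)) = 0"
        by (rule sum.neutral) (use crux[of d] in auto)
      also have "fls_subst_pow F (\<alpha> ^ d) (r - of_nat j0) = fls_nth F n0"
        using \<alpha>0 unfolding fls_subst_pow_def r_def by simp
      finally show ?thesis by simp
    qed
    ultimately show False using j0 n0(1) by simp
  qed
  define G where "G = Abs_fls (\<lambda>n. fls_nth F (n * int (q ^ d)))"
  have "F = fls_compose_power G (q ^ d)"
    unfolding G_def by (rule fls_from_dvd) (use pq(2) key in auto)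
  moreover have "\<forall>n. fls_nth G n \<in> K"
  proof
    fix n
    have "fls_nth G n = fls_nth (fls_compose_power G (q ^ d)) (n * int (q ^ d))"
      using pq(2) by (simp add: fls_compose_power.rep_eq)
    then show "fls_nth G n \<in> K" using F_K \<open>F = fls_compose_power G (q ^ d)\<close> by metis
  qed
  ultimately show ?thesis by blast
qed

end
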